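(* Let $k\ge 2$ be even and $i\in\{1,\ldots,k-1\}$ such that $\binom{k}{i}$ and $\binom{k-1}{i}$ are both odd (so $i$ is even and $k-i+2\le k$). Then $\lambda_{k-i+2}-\lambda_{k-i}\equiv 2\pmod 4$.
   Context: For $0\le i\le k$ and $j=0,\ldots,k$ define $\lambda_j=\sum_{\ell=0}^{k-i}(-1)^\ell\binom{j}{\ell}\binom{k-j}{i-j+\ell}^2$, with the convention $\binom{a}{b}=0$ unless $0\le b\le a$; these are the eigenvalues of the graph $J(2k,k,i)$ on $k$-subsets of $\{1,\ldots,2k\}$ (adjacent iff intersection has size $i$). *)

theory Defs
  imports Main
begin

definition ibinom :: "int \<Rightarrow> int \<Rightarrow> int" where
  "ibinom a b = (if 0 \<le> b \<and> b \<le> a then int (nat a choose nat b) else 0)"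

text \<open>Eigenvalue lambda_j of J(2k,k,i).\<close>
definition lam :: "nat \<Rightarrow> nat \<Rightarrow> nat \<Rightarrow> int" where
  "lam k i j = (\<Sum>l = 0..k - i. (-1) ^ l * ibinom (int j) (int l)
       * (ibinom (int k - int j) (int i - int j + int l))^2)"

end

theory Submission
  imports Defs "HOL-Number_Theory.Cong"
begin

lemma even_choose_odd:
  assumes "even n" "odd d" shows "even (n choose d)"
proof (cases n)
  case 0 then show ?thesis using assms by (cases d) auto
next
  case (Suc n')
  obtain d' where d: "d = Suc d'" using assms(2) by (cases d) auto
  have "Suc d' * (Suc n' choose Suc d') = Suc n' * (n' choose d')"
    by (rule Suc_times_binomial)
  moreover have "even (Suc n' * (n' choose d'))" using assms(1) Suc by simp
  ultimately have h: "even (d * (n choose d))" using d Suc by metis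
  show ?thesis using h assms(2) by (metis even_mult_iff)
qed

lemma choose_double_mod4:
  "[(2*n choose (2*c)) = (n choose c)] (mod 4)"
proof (induction n arbitrary: c)
  case 0 then show ?case by (cases c) auto
next
  case (Suc n)
  show ?case
  proof (cases c)
    case 0 then show ?thesis by simp
  next
    case (Suc d)
    have e: "(2 * Suc n choose (2 * c)) =
       (2*n choose (2*d)) + 2 * (2*n choose Suc (2*d)) + (2*n choose (2 * Suc d))"
      using Suc by simp
    have ev: "even (2*n choose Suc (2*d))" by (rule even_choose_odd) auto
    then obtain q where q: "(2*n choose Suc (2*d)) = 2*q" by blast
    have "[(2*n choose (2*d)) + 2 * (2*n choose Suc (2*d)) + (2*n choose (2 * Suc d))
          = (n choose d) + 0 + (n choose Suc d)] (mod 4)"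
    proof (intro cong_add)
      show "[2 * (2*n choose Suc (2*d)) = 0] (mod 4)" using q
        by (simp add: cong_0_iff)
    qed (use Suc.IH in \<open>auto simp del: mult_Suc_right simp add: Suc.IH[of "Suc d", simplified]\<close>)
    moreover have "(n choose d) + 0 + (n choose Suc d) = (Suc n choose c)" using Suc by simp
    ultimately show ?thesis unfolding e by simp
  qed
qed

lemma lucas_ee: "[(2*N choose (2*c)) = (N choose c)] (mod 2)"
  using choose_double_mod4[of N c] by (metis cong_dvd_modulus_nat dvd_triv_left numeral_Bit0_eq_double)

lemma lucas_eo: "[(2*N choose Suc (2*c)) = 0] (mod 2)"
  using even_choose_odd[of "2*N" "Suc (2*c)"] by (simp add: cong_0_iff)

lemma lucas_oe: "[(Suc (2*N) choose (2*c)) = (N choose c)] (mod 2)"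
proof (cases c)
  case 0 then show ?thesis by simp
next
  case (Suc d)
  have "(Suc (2*N) choose (2*c)) = (2*N choose Suc (2*d)) + (2*N choose (2*c))"
    using Suc by simp
  moreover have "[(2*N choose Suc (2*d)) + (2*N choose (2*c)) = 0 + (N choose c)] (mod 2)"
    by (intro cong_add lucas_eo lucas_ee)
  ultimately show ?thesis by simp
qed

lemma lucas_oo: "[(Suc (2*N) choose Suc (2*c)) = (N choose c)] (mod 2)"
proof -
  have "(Suc (2*N) choose Suc (2*c)) = (2*N choose (2*c)) + (2*N choose Suc (2*c))"
    by simp
  moreover have "[(2*N choose (2*c)) + (2*N choose Suc (2*c)) = (N choose c) + 0] (mod 2)"
    by (intro cong_add lucas_eo lucas_ee)
  ultimately show ?thesis by simp
qed

lemma lucas_e: "e \<le> 1 \<Longrightarrow> [(2*N+e choose (2*c)) = (N choose c)] (mod 2)"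
  using lucas_ee[of N c] lucas_oe[of N c] by (cases e) auto

lemma lucas_o: "e \<le> 1 \<Longrightarrow> [(2*N+e choose Suc (2*c)) = e * (N choose c)] (mod 2)"
  using lucas_eo[of N c] lucas_oo[of N c] by (cases e) auto

definition S :: "nat \<Rightarrow> nat \<Rightarrow> nat" where
  "S m n = (\<Sum>c<m. (m choose Suc c) * (n choose Suc c) * (n choose c))"

lemma S_bound:
  assumes "m \<le> R"
  shows "(\<Sum>c<R. (m choose Suc c) * (n choose Suc c) * (n choose c)) = S m n"
  unfolding S_def
  by (rule sum.mono_neutral_right) (use assms in auto)

lemma vander:
  assumes "M < R"
  shows "(\<Sum>d<R. (M choose d) * (N choose d)) = (M+N choose N)"
proof -
  have "(\<Sum>d<R. (M choose d) * (N choose d)) = (\<Sum>d<R+N+1. (M choose d) * (N choose d))"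
    by (rule sum.mono_neutral_left) (use assms in auto)
  also have "\<dots> = (\<Sum>d\<le>N. (M choose d) * (N choose d))"
    by (rule sum.mono_neutral_right) auto
  also have "\<dots> = (\<Sum>d\<le>N. (M choose d) * (N choose (N - d)))"
    by (rule sum.cong) (auto simp: binomial_symmetric[symmetric])
  also have "\<dots> = (M+N choose N)" by (rule vandermonde)
  finally show ?thesis .
qed

lemma sum_split2: "(\<Sum>c<2*R. g c) = (\<Sum>d<R. g (2*d) + g (Suc (2*d)))"
  by (induction R) (auto simp: ac_simps)

lemma sq_cong2: "[(x::nat)^2 = x] (mod 2)"
proof -
  have h: "x mod 2 = 0 \<or> x mod 2 = 1" by auto
  have "x*x mod 2 = (x mod 2)*(x mod 2) mod 2" by (simp add: mod_mult_eq)
  then show ?thesis using h unfolding cong_def power2_eq_square by auto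
qed

lemma S_rec:
  assumes "e \<le> 1" "f \<le> 1"
  shows "[S (2*M+e) (2*N+f) = f * (S M N + e * (M+N choose N))] (mod 2)"
proof -
  let ?g = "\<lambda>c. (2*M+e choose Suc c) * (2*N+f choose Suc c) * (2*N+f choose c)"
  have "S (2*M+e) (2*N+f) = (\<Sum>c<2*(M+1). ?g c)"
    by (rule S_bound[symmetric]) (use assms in auto)
  also have "\<dots> = (\<Sum>d<M+1. ?g (2*d) + ?g (Suc (2*d)))" by (rule sum_split2)
  finally have 1: "S (2*M+e) (2*N+f) = (\<Sum>d<M+1. ?g (2*d) + ?g (Suc (2*d)))" .
  have 2: "[(\<Sum>d<M+1. ?g (2*d) + ?g (Suc (2*d))) =
     (\<Sum>d<M+1. f * e * ((M choose d) * (N choose d)) + f * ((M choose Suc d) * (N choose Suc d) * (N choose d)))] (mod 2)"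
  proof (rule cong_sum)
    fix d
    have a: "[?g (2*d) = (e * (M choose d)) * (f * (N choose d)) * (N choose d)] (mod 2)"
      by (intro cong_mult lucas_o lucas_e assms)
    have b: "[(e * (M choose d)) * (f * (N choose d)) * (N choose d) = f * e * ((M choose d) * (N choose d))] (mod 2)"
    proof -
      have eq: "(e * (M choose d)) * (f * (N choose d)) * (N choose d) = f * e * ((M choose d) * (N choose d)^2)"
        by (simp add: power2_eq_square)
      have cg: "[f * e * ((M choose d) * (N choose d)^2) = f * e * ((M choose d) * (N choose d))] (mod 2)"
        by (intro cong_mult cong_refl sq_cong2)
      show ?thesis unfolding eq by (rule cg)
    qed
    have c: "?g (Suc (2*d)) = (2*M+e choose (2*Suc d)) * (2*N+f choose (2*Suc d)) * (2*N+f choose Suc (2*d))"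
      by simp
    have d: "[?g (Suc (2*d)) = (M choose Suc d) * (N choose Suc d) * (f * (N choose d))] (mod 2)"
      unfolding c by (intro cong_mult lucas_o lucas_e assms)
    show "[?g (2*d) + ?g (Suc (2*d)) = f * e * ((M choose d) * (N choose d)) + f * ((M choose Suc d) * (N choose Suc d) * (N choose d))] (mod 2)"
      using cong_add[OF cong_trans[OF a b] d] by (simp add: ac_simps)
  qed
  have 3: "(\<Sum>d<M+1. f * e * ((M choose d) * (N choose d)) + f * ((M choose Suc d) * (N choose Suc d) * (N choose d)))
      = f * e * (M+N choose N) + f * S M N"
    using vander[of M "M+1" N] S_bound[of M "M+1" N]
    by (simp only: sum.distrib sum_distrib_left[symmetric] mult.assoc)
  show ?thesis using 1 2 3 by (simp add: algebra_simps)
qed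

lemma cong2_odd: "[(a::nat) = b] (mod 2) \<Longrightarrow> odd a = odd b"
  by (simp add: cong_def odd_iff_mod_2_eq_one)

lemma S_parity:
  "1 \<le> I \<Longrightarrow> I \<le> K \<Longrightarrow> odd (K choose I) \<Longrightarrow> [S (K-I) (I-1) = (K-1 choose I)] (mod 2)"
proof (induction K arbitrary: I rule: less_induct)
  case (less K)
  define K1 e where "K1 = K div 2" and "e = K mod 2"
  have K: "K = 2*K1+e" "e \<le> 1" unfolding K1_def e_def by auto
  define I1 g where "I1 = I div 2" and "g = I mod 2"
  have I: "I = 2*I1+g" "g \<le> 1" unfolding I1_def g_def by auto
  show ?case
  proof (cases "g = 1")
    case True
    have e1: "e = 1"
    proof (rule ccontr)
      assume "e \<noteq> 1" then have "e = 0" using K by auto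
      then have "even (K choose I)" using K I True even_choose_odd[of K I] by auto
      then show False using less.prems by simp
    qed
    have i1: "I1 \<le> K1" using less.prems K I True e1 by auto
    have a: "K - I = 2*(K1-I1) + 0" "I - 1 = 2*I1 + 0" using K I True e1 i1 by auto
    have r: "[S (K-I) (I-1) = 0] (mod 2)"
      using S_rec[of 0 0 "K1-I1" I1] unfolding a by simp
    have "K - 1 = 2*K1" "I = Suc (2*I1)" using K I True e1 by auto
    then have "[(K-1 choose I) = 0] (mod 2)" using lucas_eo[of K1 I1] by simp
    then show ?thesis using r by (metis cong_sym cong_trans)
  next
    case False
    then have g0: "g = 0" using I by auto
    have I1: "1 \<le> I1" "I1 \<le> K1" using less.prems I K g0 by auto
    have a: "K - I = 2*(K1-I1) + e" "I - 1 = 2*(I1-1) + 1" using K I g0 I1 by auto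
    have r: "[S (K-I) (I-1) = 1 * (S (K1-I1) (I1-1) + e * ((K1-I1)+(I1-1) choose (I1-1)))] (mod 2)"
      unfolding a by (rule S_rec) (use K in auto)
    have kk: "(K1-I1)+(I1-1) = K1-1" using I1 by auto
    have "[(K choose I) = (K1 choose I1)] (mod 2)" using lucas_e[of e K1 I1] K I g0 by simp
    then have odd1: "odd (K1 choose I1)" using less.prems cong2_odd by blast
    have lt: "K1 < K" using K I1 by auto
    have IH: "[S (K1-I1) (I1-1) = (K1-1 choose I1)] (mod 2)"
      using less.IH[OF lt I1 odd1] .
    have pas: "(K1 choose I1) = (K1-1 choose I1) + (K1-1 choose (I1-1))"
    proof -
      obtain a where a: "K1 = Suc a" using I1 by (cases K1) auto
      obtain b where b: "I1 = Suc b" using I1 by (cases I1) auto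
      show ?thesis unfolding a b by simp
    qed
    have tgt: "[(K1-1 choose I1) + e * (K1-1 choose (I1-1)) = (K-1 choose I)] (mod 2)"
    proof (cases "e = 1")
      case True
      have "K - 1 = 2*K1 + 0" "I = 2*I1" using K I g0 True by auto
      then have "[(K-1 choose I) = (K1 choose I1)] (mod 2)" using lucas_e[of 0 K1 I1] by simp
      then show ?thesis using pas True by (simp add: cong_sym)
    next
      case False
      then have "e = 0" using K by auto
      then have "K - 1 = 2*(K1-1) + 1" "I = 2*I1" using K I g0 I1 by auto
      then have "[(K-1 choose I) = (K1-1 choose I1)] (mod 2)" using lucas_e[of 1 "K1-1" I1] by simp
      then show ?thesis using \<open>e = 0\<close> by (simp add: cong_sym)
    qed
    have "[S (K1-I1) (I1-1) + e * ((K1-I1)+(I1-1) choose (I1-1)) = (K1-1 choose I1) + e * (K1-1 choose (I1-1))] (mod 2)"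
      unfolding kk by (intro cong_add IH cong_refl)
    moreover have r': "[S (K-I) (I-1) = S (K1-I1) (I1-1) + e * ((K1-I1)+(I1-1) choose (I1-1))] (mod 2)"
      using r by (simp only: mult_1)
    ultimately show ?thesis using tgt by (metis cong_trans)
  qed
qed

lemma split_atMost2: "(\<Sum>l\<le>2*M. (g l::int)) = (\<Sum>d\<le>M. g (2*d)) + (\<Sum>d<M. g (Suc (2*d)))"
proof (induction M)
  case 0 then show ?case by simp
next
  case (Suc M)
  have "(\<Sum>l\<le>2*Suc M. g l) = (\<Sum>l\<le>2*M. g l) + g (Suc (2*M)) + g (2 * Suc M)"
    by (simp add: ac_simps)
  then show ?case using Suc by (simp add: ac_simps)
qed

lemma sq_lift:
  assumes "[(a::nat) = b] (mod 2)"
  shows "[int a ^ 2 = int b ^ 2] (mod 4)"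
proof -
  have d1: "2 dvd (int a - int b)" using assms
    by (metis cong_int_iff cong_iff_dvd_diff of_nat_numeral)
  have d2: "2 dvd (int a + int b)"
  proof -
    have "int a + int b = (int a - int b) + 2 * int b" by simp
    then show ?thesis using d1 by simp
  qed
  have "(2::int) * 2 dvd (int a - int b) * (int a + int b)" using d1 d2 by (rule mult_dvd_mono)
  moreover have "(int a - int b) * (int a + int b) = int a ^ 2 - int b ^ 2"
    by (simp add: power2_eq_square algebra_simps)
  ultimately show ?thesis by (simp add: cong_iff_dvd_diff)
qed

lemma int_cong4: "[int (2*n choose (2*c)) = int (n choose c)] (mod 4)"
  using choose_double_mod4[of n c] by (metis cong_int_iff of_nat_numeral)

lemma halve:
  "[(\<Sum>l\<le>2*M. (-1)^l * int (2*P choose l) * int (2*Q choose (2*M - l))^2)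
     = (\<Sum>d\<le>M. int (P choose d) * int (Q choose (M-d))^2)] (mod 4)"
proof -
  let ?g = "\<lambda>l. (-1)^l * int (2*P choose l) * int (2*Q choose (2*M - l))^2 :: int"
  have 1: "[(\<Sum>d\<le>M. ?g (2*d)) = (\<Sum>d\<le>M. int (P choose d) * int (Q choose (M-d))^2)] (mod 4)"
  proof (rule cong_sum)
    fix d assume "d \<in> {..M}"
    then have e: "2*M - 2*d = 2*(M-d)" by auto
    have h1: "?g (2*d) = int (2*P choose (2*d)) * int (2*Q choose (2*(M-d)))^2"
      unfolding e by simp
    have h2: "[int (2*P choose (2*d)) * int (2*Q choose (2*(M-d)))^2 = int (P choose d) * int (Q choose (M-d))^2] (mod 4)"
      by (intro cong_mult int_cong4 sq_lift lucas_ee)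
    show "[?g (2*d) = int (P choose d) * int (Q choose (M-d))^2] (mod 4)" unfolding h1 by (rule h2)
  qed
  have 2: "[(\<Sum>d<M. ?g (Suc (2*d))) = (\<Sum>d<M. 0)] (mod 4)"
  proof (rule cong_sum)
    fix d assume "d \<in> {..<M}"
    then have e: "2*M - Suc (2*d) = Suc (2*(M-d-1))" by auto
    have "even (2*Q choose Suc (2*(M-d-1)))" by (rule even_choose_odd) auto
    then obtain q where q: "(2*Q choose Suc (2*(M-d-1))) = 2*q" by blast
    have h: "?g (Suc (2*d)) = 4 * (- (int (2*P choose Suc (2*d)) * int q^2))"
      unfolding e q by (simp add: power2_eq_square)
    show "[?g (Suc (2*d)) = 0] (mod 4)" using h by (metis cong_0_iff dvd_triv_left)
  qed
  show ?thesis unfolding split_atMost2 using cong_add[OF 1 2] by simp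
qed

lemma sum_rev_atMost: "(\<Sum>d\<le>(M::nat). (h d::int)) = (\<Sum>a\<le>M. h (M - a))"
  using sum.atLeastAtMost_rev[of h 0 M] by (simp add: atLeast0AtMost)

lemma diffS:
  "(\<Sum>d\<le>M. int (Suc M choose d) * int (n choose (M-d))^2)
   - (\<Sum>d\<le>M. int (M choose d) * int (Suc n choose (M-d))^2) = -2 * int (S M n)"
proof -
  define u where "u c = int (n choose c)" for c
  have B: "(\<Sum>d\<le>M. int (Suc M choose d) * int (n choose (M-d))^2)
      = (\<Sum>a<Suc M. int (Suc M choose Suc a) * u a ^2)"
  proof -
    have "(\<Sum>d\<le>M. int (Suc M choose d) * int (n choose (M-d))^2)
       = (\<Sum>a\<le>M. int (Suc M choose (M-a)) * int (n choose (M-(M-a)))^2)"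
      by (rule sum_rev_atMost)
    also have "\<dots> = (\<Sum>a\<le>M. int (Suc M choose Suc a) * u a ^2)"
    proof (rule sum.cong)
      fix a assume "a \<in> {..M}"
      then have "a \<le> M" by simp
      then have "(Suc M choose (M-a)) = (Suc M choose (Suc M - (M-a)))"
        by (intro binomial_symmetric) auto
      moreover have "Suc M - (M-a) = Suc a" "M - (M-a) = a" using \<open>a \<le> M\<close> by auto
      ultimately show "int (Suc M choose (M-a)) * int (n choose (M-(M-a)))^2 = int (Suc M choose Suc a) * u a ^2"
        by (simp add: u_def)
    qed simp
    finally show ?thesis by (simp add: lessThan_Suc_atMost)
  qed
  have A: "(\<Sum>d\<le>M. int (M choose d) * int (Suc n choose (M-d))^2)
      = (\<Sum>a<Suc M. int (M choose a) * int (Suc n choose a)^2)"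
  proof -
    have "(\<Sum>d\<le>M. int (M choose d) * int (Suc n choose (M-d))^2)
       = (\<Sum>a\<le>M. int (M choose (M-a)) * int (Suc n choose (M-(M-a)))^2)"
      by (rule sum_rev_atMost)
    also have "\<dots> = (\<Sum>a\<le>M. int (M choose a) * int (Suc n choose a)^2)"
    proof (rule sum.cong)
      fix a assume "a \<in> {..M}"
      then have "a \<le> M" by simp
      then have "(M choose (M-a)) = (M choose a)"
        by (metis binomial_symmetric diff_diff_cancel diff_le_self)
      moreover have "M - (M-a) = a" using \<open>a \<le> M\<close> by auto
      ultimately show "int (M choose (M-a)) * int (Suc n choose (M-(M-a)))^2 = int (M choose a) * int (Suc n choose a)^2"
        by simp
    qed simp
    finally show ?thesis by (simp add: lessThan_Suc_atMost)
  qed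
  have A2: "(\<Sum>a<Suc M. int (M choose a) * int (Suc n choose a)^2)
      = 1 + (\<Sum>c<M. int (M choose Suc c) * (u (Suc c) + u c)^2)"
    by (subst sum.lessThan_Suc_shift) (simp add: u_def add.commute)
  have B2: "(\<Sum>a<Suc M. int (Suc M choose Suc a) * u a ^2)
      = 1 + (\<Sum>c<M. int (M choose Suc c) * u (Suc c) ^2) + (\<Sum>c<M. int (M choose Suc c) * u c ^2)"
  proof -
    have "(\<Sum>a<Suc M. int (Suc M choose Suc a) * u a ^2)
       = (\<Sum>a<Suc M. int (M choose a) * u a ^2) + (\<Sum>a<Suc M. int (M choose Suc a) * u a ^2)"
      by (simp add: sum.distrib[symmetric] algebra_simps)
    moreover have "(\<Sum>a<Suc M. int (M choose a) * u a ^2) = 1 + (\<Sum>c<M. int (M choose Suc c) * u (Suc c) ^2)"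
      by (subst sum.lessThan_Suc_shift) (simp add: u_def)
    moreover have "(\<Sum>a<Suc M. int (M choose Suc a) * u a ^2) = (\<Sum>c<M. int (M choose Suc c) * u c ^2)"
      by simp
    ultimately show ?thesis by simp
  qed
  have Sd: "int (S M n) = (\<Sum>c<M. int (M choose Suc c) * u (Suc c) * u c)"
    by (simp add: S_def u_def)
  have "(\<Sum>c<M. int (M choose Suc c) * u (Suc c) ^2) + (\<Sum>c<M. int (M choose Suc c) * u c ^2)
        - (\<Sum>c<M. int (M choose Suc c) * (u (Suc c) + u c)^2)
      = (\<Sum>c<M. -2 * (int (M choose Suc c) * u (Suc c) * u c))"
    by (simp add: sum.distrib[symmetric] sum_subtractf[symmetric] power2_eq_square algebra_simps)
  also have "\<dots> = -2 * int (S M n)" by (simp add: Sd sum_distrib_left)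
  finally show ?thesis using A B A2 B2 by simp
qed

lemma ibinom_nat: "ibinom (int a) (int l) = int (a choose l)"
  unfolding ibinom_def by auto

lemma ibinom_sym: "ibinom (int n) (int n - int d) = int (n choose d)"
proof (cases "d \<le> n")
  case True
  then have "nat (int n - int d) = n - d" by auto
  then show ?thesis using True unfolding ibinom_def by (simp add: binomial_symmetric[symmetric])
next
  case False then show ?thesis unfolding ibinom_def by auto
qed

lemma lamA:
  assumes "k = m + i"
  shows "lam k i m = (\<Sum>l\<le>m. (-1)^l * int (m choose l) * int (i choose (m-l))^2)"
  unfolding lam_def
proof -
  have r: "{0..k-i} = {..m}" using assms by auto
  show "(\<Sum>l = 0..k - i. (-1) ^ l * ibinom (int m) (int l) * (ibinom (int k - int m) (int i - int m + int l))\<^sup>2)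
      = (\<Sum>l\<le>m. (-1)^l * int (m choose l) * int (i choose (m-l))^2)"
    unfolding r
  proof (rule sum.cong)
    fix l assume "l \<in> {..m}"
    then have "int k - int m = int i" "int i - int m + int l = int i - int (m - l)" using assms by auto
    then show "(-1) ^ l * ibinom (int m) (int l) * (ibinom (int k - int m) (int i - int m + int l))\<^sup>2
       = (-1)^l * int (m choose l) * int (i choose (m-l))^2"
      by (simp only: ibinom_nat ibinom_sym)
  qed simp
qed

lemma lamB:
  assumes "k = m + i" "2 \<le> i"
  shows "lam k i (m+2) = (\<Sum>l\<le>m. (-1)^l * int (m+2 choose l) * int (i-2 choose (m-l))^2)"
  unfolding lam_def
proof -
  have r: "{0..k-i} = {..m}" using assms by auto
  show "(\<Sum>l = 0..k - i. (-1) ^ l * ibinom (int (m+2)) (int l) * (ibinom (int k - int (m+2)) (int i - int (m+2) + int l))\<^sup>2)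
      = (\<Sum>l\<le>m. (-1)^l * int (m+2 choose l) * int (i-2 choose (m-l))^2)"
    unfolding r
  proof (rule sum.cong)
    fix l assume "l \<in> {..m}"
    then have "int k - int (m+2) = int (i-2)" "int i - int (m+2) + int l = int (i-2) - int (m - l)" using assms by auto
    then show "(-1) ^ l * ibinom (int (m+2)) (int l) * (ibinom (int k - int (m+2)) (int i - int (m+2) + int l))\<^sup>2
       = (-1)^l * int (m+2 choose l) * int (i-2 choose (m-l))^2"
      by (simp only: ibinom_nat ibinom_sym)
  qed simp
qed

theorem mainTheorem12:
  fixes k i :: nat
  assumes "k \<ge> 2" and "even k" and "1 \<le> i" and "i \<le> k - 1"
    and "odd (k choose i)" and "odd ((k - 1) choose i)"
  shows "(lam k i (k - i + 2) - lam k i (k - i)) mod 4 = 2"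
proof -
  have ei: "even i"
  proof (rule ccontr)
    assume "odd i" then have "even (k choose i)" using assms(2) by (rule even_choose_odd[rotated])
    then show False using assms(5) by simp
  qed
  obtain i' where i': "i = 2*i'" using ei by blast
  obtain k' where k': "k = 2*k'" using assms(2) by blast
  have i1: "1 \<le> i'" "i' < k'" using assms i' k' by auto
  define M where "M = k' - i'"
  have m: "k - i = 2*M" using i' k' i1 unfolding M_def by auto
  have m2: "k - 2*i' = 2*M" using m i' by simp
  have A: "lam k i (k-i) = (\<Sum>l\<le>2*M. (-1)^l * int (2*M choose l) * int (2*i' choose (2*M-l))^2)"
    unfolding i' m2 by (rule lamA) (use m i' i1 k' in auto)
  have B: "lam k i (k-i+2) = (\<Sum>l\<le>2*M. (-1)^l * int (2*Suc M choose l) * int (2*(i'-1) choose (2*M-l))^2)"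
  proof -
    have "lam k i (k-i+2) = (\<Sum>l\<le>2*M. (-1)^l * int (2*M+2 choose l) * int (i-2 choose (2*M-l))^2)"
      unfolding i' m2 by (rule lamB) (use m i' i1 k' in auto)
    moreover have "2*M+2 = 2*Suc M" "i - 2 = 2*(i'-1)" using i' by auto
    ultimately show ?thesis by simp
  qed
  have hA: "[lam k i (k-i) = (\<Sum>d\<le>M. int (M choose d) * int (i' choose (M-d))^2)] (mod 4)"
    unfolding A by (rule halve)
  have hB: "[lam k i (k-i+2) = (\<Sum>d\<le>M. int (Suc M choose d) * int ((i'-1) choose (M-d))^2)] (mod 4)"
    unfolding B by (rule halve)
  have si: "Suc (i'-1) = i'" using i1 by auto
  have D: "[lam k i (k-i+2) - lam k i (k-i) = -2 * int (S M (i'-1))] (mod 4)"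
    using cong_diff[OF hB hA] diffS[of M "i'-1"] unfolding si by simp
  have o1: "odd (k' choose i')"
    using assms(5) lucas_ee[of k' i'] cong2_odd unfolding k' i' by blast
  have km: "k - 1 = Suc (2*(k'-1))" using k' i1 by auto
  have o2: "odd (k'-1 choose i')"
    using assms(6) lucas_oe[of "k'-1" i'] cong2_odd unfolding km i' by blast
  have "[S (k'-i') (i'-1) = (k'-1 choose i')] (mod 2)"
    using S_parity[of i' k'] i1 o1 by auto
  then have oS: "odd (S M (i'-1))" using o2 cong2_odd unfolding M_def by blast
  then obtain q where q: "S M (i'-1) = 2*q+1" by (metis oddE)
  have "(-2 * int (S M (i'-1))) mod 4 = 2" unfolding q
  proof -
    have e: "-2 * int (2*q+1) = 2 + 4 * (- int q - 1)" by simp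
    have g: "\<And>x::int. (2 + 4 * x) mod 4 = 2" by simp
    show "(-2 * int (2*q+1)) mod 4 = 2" unfolding e by (rule g)
  qed
  then show ?thesis using D unfolding cong_def by simp
qed

end
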